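(* Let $S_0=\{x\in\mathbb{C}:0<{\rm Im}(x)<\pi\}$. Then for all $x,y\in S_0$, $$s_{S_0}(x,y)\le{\rm th}(\rho_{S_0}(x,y)/2)\le(\pi/2)\,s_{S_0}(x,y),$$ and this inequality is sharp.
   Context: For a domain $G\subsetneq\mathbb{C}$, $s_G(x,y)=\frac{|x-y|}{\inf_{z\in\partial G}(|x-z|+|z-y|)}$. The hyperbolic metric of $\mathbb{H}^2=\{z:{\rm Im}\,z>0\}$ satisfies ${\rm th}(\rho_{\mathbb{H}^2}(u,v)/2)=|u-v|/|u-\overline{v}|$, and $\rho_{S_0}(x,y)=\rho_{\mathbb{H}^2}(e^x,e^y)$ ($z\mapsto e^z$ maps $S_0$ conformally onto $\mathbb{H}^2$). *)

theory Defs
  imports "HOL-Analysis.Analysis"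
begin

definition s_metric :: "complex set \<Rightarrow> complex \<Rightarrow> complex \<Rightarrow> real" where
  "s_metric G x y = cmod (x - y) / (INF z\<in>frontier G. cmod (x - z) + cmod (z - y))"

text \<open>Hyperbolic metric of the upper half plane, via th(rho/2) = |u-v|/|u - conj v|.\<close>
definition rho_H2 :: "complex \<Rightarrow> complex \<Rightarrow> real" where
  "rho_H2 u v = 2 * artanh (cmod (u - v) / cmod (u - cnj v))"

definition S0 :: "complex set" where
  "S0 = {x. 0 < Im x \<and> Im x < pi}"

text \<open>Hyperbolic metric of the strip S0, transported by exp onto the upper half plane.\<close>
definition rho_S0 :: "complex \<Rightarrow> complex \<Rightarrow> real" where
  "rho_S0 x y = rho_H2 (exp x) (exp y)"

end

theory Submission
  imports Defs
begin

lemma xcos_le_sin: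
  fixes x :: real assumes "0 \<le> x" "x \<le> pi" shows "x * cos x \<le> sin x"
proof -
  have "(\<lambda>x. sin x - x * cos x) 0 \<le> (\<lambda>x. sin x - x * cos x) x"
  proof (rule DERIV_nonneg_imp_nondecreasing[of 0 x])
    fix y assume y: "0 \<le> y" "y \<le> x"
    show "\<exists>d. ((\<lambda>x. sin x - x * cos x) has_real_derivative d) (at y) \<and> d \<ge> 0"
      apply (rule exI[of _ "y * sin y"])
      using y assms by (auto intro!: derivative_eq_intros sin_ge_zero mult_nonneg_nonneg)
  qed (use assms in auto)
  then show ?thesis by simp
qed

lemma sinc_decr:
  fixes a b :: real assumes "0 < a" "a \<le> b" "b \<le> pi" shows "a * sin b \<le> b * sin a"
proof -
  have "sin b / b \<le> sin a / a"
  proof (rule DERIV_nonpos_imp_nonincreasing[of a b "\<lambda>x. sin x / x"])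
    fix x assume x: "a \<le> x" "x \<le> b"
    then have "x > 0" using assms by auto
    show "\<exists>y. DERIV (\<lambda>x. sin x / x) x :> y \<and> y \<le> 0"
      apply (rule exI[of _ "(x * cos x - sin x) / x^2"])
      using \<open>x > 0\<close> xcos_le_sin[of x] x assms
      by (auto intro!: derivative_eq_intros divide_nonpos_pos simp: field_simps power2_eq_square)
  qed (use assms in auto)
  then show ?thesis using assms by (simp add: field_simps)
qed

lemma jordan:
  fixes b :: real assumes "0 \<le> b" "b \<le> pi/2" shows "2 * b / pi \<le> sin b"
proof (cases "b = 0")
  case False
  then have "b * sin (pi/2) \<le> (pi/2) * sin b" using assms by (intro sinc_decr) auto
  then show ?thesis by (simp add: field_simps)
qed simp

lemma sinh_upper_aux:
  fixes u :: real assumes "0 \<le> u" "u \<le> 3/2"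
  shows "sinh u \<le> u + u^3/6 + u^5/22"
proof -
  obtain t1 where t1: "\<bar>t1\<bar> \<le> \<bar>u\<bar>" "exp u = (\<Sum>m<5. (u ^ m) / fact m) + (exp t1 / fact 5) * u ^ 5"
    using Maclaurin_exp_le[of u 5] by blast
  obtain t2 where t2: "\<bar>t2\<bar> \<le> \<bar>-u\<bar>" "exp (-u) = (\<Sum>m<5. ((-u) ^ m) / fact m) + (exp t2 / fact 5) * (-u) ^ 5"
    using Maclaurin_exp_le[of "-u" 5] by blast
  have e34: "exp (3/4::real) \<le> 37/16" using exp_bound[of "3/4"] by (simp add: power2_eq_square)
  have "exp (3/2::real) = exp (3/4) * exp (3/4)" by (simp flip: exp_add)
  also have "\<dots> \<le> (37/16) * (37/16)" using e34 by (intro mult_mono) auto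
  finally have e32: "exp (3/2::real) \<le> 1369/256" by simp
  have "exp t1 \<le> exp u" "exp t2 \<le> exp u" using t1(1) t2(1) assms by auto
  moreover have "exp u \<le> 1369/256" using e32 assms by (meson exp_le_cancel_iff order_trans)
  ultimately have E: "exp t1 + exp t2 \<le> 2 * (1369/256)" by linarith
  have "sinh u = u + u^3/6 + (exp t1 + exp t2) / 240 * u^5"
    unfolding sinh_field_def t1(2) t2(2)
    by (simp add: numeral_eq_Suc fact_numeral field_simps)
  also have "\<dots> \<le> u + u^3/6 + (2 * (1369/256)) / 240 * u^5"
    using E assms by (intro add_left_mono mult_right_mono divide_right_mono) auto
  also have "\<dots> \<le> u + u^3/6 + u^5/22" using assms by simp
  finally show ?thesis .
qed

lemma sinh_key_nonneg:
  fixes v :: real assumes v: "v \<ge> 0"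
  shows "9 * (sinh v ^ 2 - v^2) \<le> 5 * v^2 * sinh v ^ 2"
proof (cases "v^2 \<ge> 9/5")
  case True
  have "9/5 * sinh v ^ 2 \<le> v^2 * sinh v ^ 2" using True by (intro mult_right_mono) auto
  then show ?thesis using True by (simp add: algebra_simps)
next
  case False
  then have "v \<le> 3/2" using v power_strict_mono[of "3/2" v 2] by (rule_tac ccontr) (auto simp: power2_eq_square)
  then have s1: "sinh v \<le> v + v^3/6 + v^5/22" using sinh_upper_aux v by blast
  have s0: "0 \<le> sinh v" using v by simp
  have "sinh v ^ 2 \<le> (v + v^3/6 + v^5/22)^2" using s1 s0 by (intro power_mono) auto
  then have "sinh v ^ 2 * (9 - 5 * v^2) \<le> (v + v^3/6 + v^5/22)^2 * (9 - 5 * v^2)"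
    using False by (intro mult_right_mono) auto
  also have "\<dots> = 9 * v^2 - v^4 * (2 + 79/132 * v^2 + 181/396 * v^4 + 83/1452 * v^6 + 5/484 * v^8)"
    by (simp add: field_simps power2_eq_square power3_eq_cube power4_eq_xxxx eval_nat_numeral)
  also have "\<dots> \<le> 9 * v^2"
  proof -
    have "0 \<le> v^4 * (2 + 79/132 * v^2 + 181/396 * v^4 + 83/1452 * v^6 + 5/484 * v^8)"
      using v by (intro mult_nonneg_nonneg add_nonneg_nonneg) auto
    then show ?thesis by linarith
  qed
  finally have "sinh v ^ 2 * (9 - 5 * v^2) \<le> 9 * v^2" .
  moreover have "sinh v ^ 2 * (9 - 5 * v^2) = 9 * sinh v ^ 2 - 5 * v^2 * sinh v ^ 2" by (simp add: algebra_simps)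
  ultimately show ?thesis by (simp add: algebra_simps)
qed

lemma sinh_key:
  fixes u :: real
  shows "9 * (sinh u ^ 2 - u^2) \<le> 5 * u^2 * sinh u ^ 2"
proof -
  have "sinh u ^ 2 = sinh \<bar>u\<bar> ^ 2" by simp
  moreover have "u^2 = \<bar>u\<bar>^2" by simp
  ultimately show ?thesis using sinh_key_nonneg[of "\<bar>u\<bar>"] by simp
qed

lemma core_lower:
  fixes u a b :: real
  assumes "0 \<le> a" "a < b" "b \<le> pi/2"
  shows "(u^2 + a^2) / (u^2 + b^2) \<le> (sinh u ^ 2 + sin a ^ 2) / (sinh u ^ 2 + sin b ^ 2)"
proof -
  define s w A B sa sb where "s = sinh u ^ 2" "w = u^2" "A = a^2" "B = b^2" "sa = sin a ^ 2" "sb = sin b ^ 2"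
  have ws: "w \<le> s" unfolding s_w_A_B_sa_sb_def using real_le_abs_sinh[of u]
    by (metis abs_le_square_iff sinh_field_def exp_minus inverse_eq_divide sinh_real_abs)
  have w0: "0 \<le> w" unfolding s_w_A_B_sa_sb_def by simp
  have "0 < sin b" using assms by (intro sin_gt_zero) auto
  then have sb0: "0 < sb" unfolding s_w_A_B_sa_sb_def by simp
  have b0: "0 < B" unfolding s_w_A_B_sa_sb_def using assms by auto
  have AB: "A \<le> B" unfolding s_w_A_B_sa_sb_def using assms by (intro power_mono) auto
  have F1: "sb - sa \<le> B - A"
  proof -
    have "sin (b + a) * sin (b - a) = sin b ^ 2 * cos a ^ 2 - cos b ^ 2 * sin a ^ 2"
      by (simp add: sin_add sin_diff power2_eq_square algebra_simps)
    also have "\<dots> = sb - sa" unfolding s_w_A_B_sa_sb_def by (simp add: cos_squared_eq algebra_simps)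
    finally have "sb - sa = sin (b + a) * sin (b - a)" by simp
    also have "\<dots> \<le> (b + a) * (b - a)"
      using assms by (intro mult_mono sin_x_le_x sin_ge_zero) auto
    also have "\<dots> = B - A" unfolding s_w_A_B_sa_sb_def by (simp add: algebra_simps power2_eq_square)
    finally show ?thesis .
  qed
  have F2: "A * sb \<le> B * sa"
  proof (cases "a = 0")
    case True then show ?thesis unfolding s_w_A_B_sa_sb_def by simp
  next
    case False
    then have "a * sin b \<le> b * sin a" using assms by (intro sinc_decr) auto
    moreover have "0 \<le> a * sin b" using assms by (intro mult_nonneg_nonneg sin_ge_zero) auto
    ultimately have "(a * sin b)^2 \<le> (b * sin a)^2" by (intro power_mono) auto
    then show ?thesis unfolding s_w_A_B_sa_sb_def by (simp add: power_mult_distrib)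
  qed
  have m1: "w * (sb - sa) \<le> w * (B - A)" using F1 w0 by (intro mult_left_mono)
  have m2: "w * (B - A) \<le> s * (B - A)" using ws AB by (intro mult_right_mono) auto
  have "(w + A) * (s + sb) \<le> (s + sa) * (w + B)"
    using m1 m2 F2 by (simp add: algebra_simps)
  then show ?thesis unfolding s_w_A_B_sa_sb_def[symmetric]
    using sb0 b0 w0 ws by (simp add: divide_simps)
qed


lemma core_upper:
  fixes u a b :: real
  assumes "0 \<le> a" "a < b" "b \<le> pi/2"
  shows "(sinh u ^ 2 + sin a ^ 2) / (sinh u ^ 2 + sin b ^ 2) \<le> (pi^2/4) * ((u^2 + a^2) / (u^2 + b^2))"
proof -
  define s w A B sa sb k where "s = sinh u ^ 2" "w = u^2" "A = a^2" "B = b^2" "sa = sin a ^ 2" "sb = sin b ^ 2" "k = pi^2/4"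
  note defs = s_w_A_B_sa_sb_k_def
  have ws: "w \<le> s" unfolding defs using real_le_abs_sinh[of u]
    by (metis abs_le_square_iff sinh_field_def exp_minus inverse_eq_divide sinh_real_abs)
  have w0: "0 \<le> w" unfolding defs by simp
  have A0: "0 \<le> A" unfolding defs by simp
  have "0 < sin b" using assms by (intro sin_gt_zero) auto
  then have sb0: "0 < sb" unfolding defs by simp
  have b0: "0 < B" unfolding defs using assms by auto
  have k94: "9/4 \<le> k" unfolding defs using mult_mono[of 3 pi 3 pi] pi_gt3 by (simp add: power2_eq_square)
  have saA: "sa \<le> A" unfolding defs using abs_sin_x_le_abs_x[of a]
    by (metis abs_le_square_iff)
  have Bk: "B \<le> k" unfolding defs using assms power_mono[of "b*2" pi 2] by (simp add: power_mult_distrib)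
  have Bsb: "B \<le> k * sb"
  proof -
    have j: "2 * b / pi \<le> sin b" using assms by (intro jordan) auto
    have "(2 * b / pi)^2 \<le> sin b ^ 2" using j assms by (intro power_mono) auto
    then show ?thesis unfolding defs by (simp add: power_divide power_mult_distrib field_simps)
  qed
  have key: "9 * (s - w) \<le> 5 * w * s" unfolding defs using sinh_key[of u] by simp
  have e1: "(s + sa) * (w + B) \<le> (s + A) * (w + B)" using saA w0 b0 by (intro mult_right_mono) auto
  have e2: "w * B \<le> w * (k * sb)" using Bsb w0 by (intro mult_left_mono)
  have e3: "A * B \<le> A * (k * sb)" using Bsb A0 by (intro mult_left_mono)
  have e4: "B * (s - w) \<le> k * (s - w)" using Bk ws by (intro mult_right_mono) auto
  have e5: "k * (s - w) \<le> (k - 1) * (w * s)"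
  proof -
    have "k * (9 * (s - w)) \<le> k * (5 * w * s)" using key k94 by (intro mult_left_mono) auto
    then have "9 * (k * (s - w)) \<le> 5 * k * (w * s)" by (simp add: algebra_simps)
    moreover have "5 * k * (w * s) \<le> 9 * (k - 1) * (w * s)" using k94 w0 ws by (intro mult_right_mono) auto
    ultimately show ?thesis by linarith
  qed
  have e6: "A * w \<le> A * (k * s)" 
  proof -
    have "s \<le> k * s" using mult_right_mono[of 1 k s] k94 ws w0 by simp
    then show ?thesis using A0 ws by (intro mult_left_mono) auto
  qed
  have "(s + sa) * (w + B) \<le> k * (w + A) * (s + sb)"
  proof -
    have "(s + A) * (w + B) = s * w + B * (s - w) + B * w + A * w + A * B" by (simp add: algebra_simps)
    also have "\<dots> \<le> s * w + (k - 1) * (w * s) + w * (k * sb) + A * (k * s) + A * (k * sb)"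
      using e2 e3 e4 e5 e6 by (simp add: algebra_simps)
    also have "\<dots> = k * (w + A) * (s + sb)" by (simp add: algebra_simps)
    finally show ?thesis using e1 by linarith
  qed
  then show ?thesis unfolding defs[symmetric]
    using sb0 b0 w0 ws by (simp add: divide_simps)
qed

lemma real_exp_identity:
  fixes a b p q :: real
  shows "(exp a * cos p - exp b * cos q)^2 + (exp a * sin p - exp b * sin q)^2
       = 4 * exp (a + b) * (sinh ((a - b)/2) ^ 2 + sin ((p - q)/2) ^ 2)"
proof -
  define c h where "c = (a + b)/2" "h = (a - b)/2"
  have "a = c + h" "b = c - h" "a + b = c + c" unfolding c_h_def by (simp_all add: field_simps)
  then have ea: "exp a = exp c * exp h" and eb: "exp b = exp c / exp h" and eab: "exp (a + b) = exp c ^ 2"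
    by (metis exp_add, metis exp_diff, metis exp_add power2_eq_square)
  have sh: "sinh h = (exp h - 1 / exp h) / 2" by (simp add: sinh_field_def exp_minus inverse_eq_divide)
  have "2 * ((p - q)/2) = p - q" by simp
  then have "cos (p - q) = 1 - 2 * sin((p-q)/2)^2" using cos_double_sin[of "(p-q)/2"] by metis
  then have sn: "sin ((p - q)/2) ^ 2 = (1 - cos (p - q)) / 2" by simp
  have cd: "cos (p - q) = cos p * cos q + sin p * sin q" by (rule cos_diff)
  have hp: "exp h > 0" by simp
  have "(exp a * cos p - exp b * cos q)^2 + (exp a * sin p - exp b * sin q)^2
     = exp a ^ 2 * (sin p ^ 2 + cos p ^ 2) + exp b ^ 2 * (sin q ^ 2 + cos q ^ 2) - 2 * exp a * exp b * (cos p * cos q + sin p * sin q)"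
    by (simp add: power2_eq_square algebra_simps del: sin_cos_squared_add sin_cos_squared_add2 sin_cos_squared_add3)
  also have "\<dots> = exp a ^ 2 + exp b ^ 2 - 2 * exp a * exp b * cos (p - q)" by (simp add: cd)
  also have "\<dots> = 4 * exp (a + b) * (sinh ((a - b)/2) ^ 2 + sin ((p - q)/2) ^ 2)"
    unfolding sn c_h_def(2)[symmetric] sh eab ea eb
    using hp by (simp add: field_simps power2_eq_square)
  finally show ?thesis .
qed

lemma cmod_exp_diff_sq:
  "cmod (exp x - exp y) ^ 2 = 4 * exp (Re x + Re y) * (sinh ((Re x - Re y)/2) ^ 2 + sin ((Im x - Im y)/2) ^ 2)"
  unfolding cmod_power2 by (simp add: Re_exp Im_exp real_exp_identity)

lemma open_S0: "open S0"
proof -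
  have "S0 = {x. 0 < Im x} \<inter> {x. Im x < pi}" unfolding S0_def by auto
  moreover have "open {x. 0 < Im x}" "open {x. Im x < pi}"
    by (intro open_Collect_less continuous_intros)+
  ultimately show ?thesis by (metis open_Int)
qed

lemma closure_S0_sub: "closure S0 \<subseteq> {x. 0 \<le> Im x} \<inter> {x. Im x \<le> pi}"
proof (rule closure_minimal)
  show "S0 \<subseteq> {x. 0 \<le> Im x} \<inter> {x. Im x \<le> pi}" unfolding S0_def by auto
  show "closed ({x. 0 \<le> Im x} \<inter> {x. Im x \<le> pi})"
    by (intro closed_Int closed_Collect_le continuous_intros)
qed

lemma frontier_S0_sub: "z \<in> frontier S0 \<Longrightarrow> Im z = 0 \<or> Im z = pi"
proof -
  assume z: "z \<in> frontier S0"
  then have "z \<in> closure S0" "z \<notin> S0" using open_S0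
    by (auto simp: frontier_def interior_open)
  then show ?thesis using closure_S0_sub unfolding S0_def by force
qed

lemma frontier_S0_0: "Complex r 0 \<in> frontier S0"
proof -
  have "Complex r 0 \<in> closure S0" unfolding closure_approachable
  proof (intro allI impI)
    fix e :: real assume e: "e > 0"
    define y where "y = Complex r (min (e/2) (pi/2))"
    have "y \<in> S0" unfolding y_def S0_def using e pi_gt_zero by (auto simp: min_def)
    moreover have "dist y (Complex r 0) < e" unfolding y_def dist_norm using e pi_gt_zero
      by (auto simp: cmod_def min_def)
    ultimately show "\<exists>y\<in>S0. dist y (Complex r 0) < e" by blast
  qed
  moreover have "Complex r 0 \<notin> S0" unfolding S0_def by simp
  ultimately show ?thesis using open_S0 by (simp add: frontier_def interior_open)
qed

lemma frontier_S0_pi: "Complex r pi \<in> frontier S0"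
proof -
  have "Complex r pi \<in> closure S0" unfolding closure_approachable
  proof (intro allI impI)
    fix e :: real assume e: "e > 0"
    define y where "y = Complex r (pi - min (e/2) (pi/2))"
    have "y \<in> S0" unfolding y_def S0_def using e pi_gt_zero by (auto simp: min_def)
    moreover have "dist y (Complex r pi) < e" unfolding y_def dist_norm using e pi_gt_zero
      by (auto simp: cmod_def min_def)
    ultimately show "\<exists>y\<in>S0. dist y (Complex r pi) < e" by blast
  qed
  moreover have "Complex r pi \<notin> S0" unfolding S0_def by simp
  ultimately show ?thesis using open_S0 by (simp add: frontier_def interior_open)
qed

lemma seg_sum:
  fixes x w :: complex and t :: real
  assumes "0 \<le> t" "t \<le> 1"
  shows "cmod (x - (x + of_real t * (w - x))) + cmod ((x + of_real t * (w - x)) - w) = cmod (x - w)"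
proof -
  have "x - (x + of_real t * (w - x)) = - (of_real t * (w - x))" by simp
  then have 1: "cmod (x - (x + of_real t * (w - x))) = t * cmod (x - w)"
    using assms by (simp add: norm_mult norm_minus_commute)
  have "(x + of_real t * (w - x)) - w = of_real (1 - t) * (x - w)" by (simp add: algebra_simps)
  moreover have "cmod (of_real (1 - t) * (x - w)) = (1 - t) * cmod (x - w)"
    unfolding norm_mult norm_of_real using assms by simp
  ultimately have 2: "cmod ((x + of_real t * (w - x)) - w) = (1 - t) * cmod (x - w)" by simp
  show ?thesis unfolding 1 2 by (simp add: algebra_simps)
qed

lemma refl0: "Im z = 0 \<Longrightarrow> cmod (z - y) = cmod (z - cnj y)"
proof -
  assume "Im z = 0"
  then have "cnj (z - y) = z - cnj y" by (simp add: complex_eq_iff)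
  then show ?thesis by (metis complex_mod_cnj)
qed

lemma reflpi: "Im z = pi \<Longrightarrow> cmod (z - y) = cmod (z - (cnj y + 2 * pi * \<i>))"
proof -
  assume "Im z = pi"
  then have "cnj (z - y) = z - (cnj y + 2 * pi * \<i>)" by (simp add: complex_eq_iff)
  then show ?thesis by (metis complex_mod_cnj)
qed

lemma INF_S0:
  assumes x: "x \<in> S0" and y: "y \<in> S0"
  shows "(INF z\<in>frontier S0. cmod (x - z) + cmod (z - y))
       = min (cmod (x - cnj y)) (cmod (x - (cnj y + 2 * pi * \<i>)))"
proof -
  define D1 D2 where "D1 = cmod (x - cnj y)" and "D2 = cmod (x - (cnj y + 2 * pi * \<i>))"
  define f where "f = (\<lambda>z. cmod (x - z) + cmod (z - y))"
  have px: "0 < Im x" "Im x < pi" and py: "0 < Im y" "Im y < pi" using x y unfolding S0_def by auto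
  have low: "min D1 D2 \<le> f z" if "z \<in> frontier S0" for z
  proof -
    have "Im z = 0 \<or> Im z = pi" using frontier_S0_sub that by blast
    then show ?thesis
    proof
      assume "Im z = 0"
      then have "f z = cmod (x - z) + cmod (z - cnj y)" unfolding f_def using refl0[OF \<open>Im z = 0\<close>, of y] by simp
      moreover have "D1 \<le> cmod (x - z) + cmod (z - cnj y)" unfolding D1_def
        using norm_triangle_ineq[of "x - z" "z - cnj y"] by simp
      ultimately show ?thesis by simp
    next
      assume "Im z = pi"
      then have "f z = cmod (x - z) + cmod (z - (cnj y + 2 * pi * \<i>))" unfolding f_def using reflpi[OF \<open>Im z = pi\<close>, of y] by simp
      moreover have "D2 \<le> cmod (x - z) + cmod (z - (cnj y + 2 * pi * \<i>))"
      proof -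
        have eq: "(x - z) + (z - (cnj y + 2 * pi * \<i>)) = x - (cnj y + 2 * pi * \<i>)" by (simp add: algebra_simps)
        show ?thesis unfolding D2_def using norm_triangle_ineq[of "x - z" "z - (cnj y + 2 * pi * \<i>)"] unfolding eq .
      qed
      ultimately show ?thesis by simp
    qed
  qed
  have bdd: "bdd_below (f ` frontier S0)" unfolding f_def by (rule bdd_belowI[of _ 0]) auto
  have ne: "frontier S0 \<noteq> {}" using frontier_S0_0 by blast
  define t1 where "t1 = Im x / (Im x + Im y)"
  define z1 where "z1 = x + of_real t1 * (cnj y - x)"
  have t1: "0 \<le> t1" "t1 \<le> 1" unfolding t1_def using px py by auto
  have "Im z1 = 0" unfolding z1_def t1_def using px py by (simp add: field_simps)
  then have "z1 = Complex (Re z1) 0" by (simp add: complex_eq_iff)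
  then have z1f: "z1 \<in> frontier S0" using frontier_S0_0[of "Re z1"] by simp
  have "f z1 = cmod (x - z1) + cmod (z1 - cnj y)" unfolding f_def using refl0[OF \<open>Im z1 = 0\<close>, of y] by simp
  also have "\<dots> = D1" unfolding D1_def z1_def by (rule seg_sum[OF t1])
  finally have "f z1 = D1" .
  then have u1: "(INF z\<in>frontier S0. f z) \<le> D1" using cINF_lower[OF bdd z1f] by simp
  define t2 where "t2 = (pi - Im x) / (2 * pi - Im x - Im y)"
  define z2 where "z2 = x + of_real t2 * ((cnj y + 2 * pi * \<i>) - x)"
  have t2: "0 \<le> t2" "t2 \<le> 1" unfolding t2_def using px py by auto
  have "Im z2 = pi" unfolding z2_def t2_def using px py by (simp add: field_simps)
  then have "z2 = Complex (Re z2) pi" by (simp add: complex_eq_iff)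
  then have z2f: "z2 \<in> frontier S0" using frontier_S0_pi[of "Re z2"] by simp
  have "f z2 = cmod (x - z2) + cmod (z2 - (cnj y + 2 * pi * \<i>))" unfolding f_def using reflpi[OF \<open>Im z2 = pi\<close>, of y] by simp
  also have "\<dots> = D2" unfolding D2_def z2_def by (rule seg_sum[OF t2])
  finally have "f z2 = D2" .
  then have u2: "(INF z\<in>frontier S0. f z) \<le> D2" using cINF_lower[OF bdd z2f] by simp
  have "min D1 D2 \<le> (INF z\<in>frontier S0. f z)" using low ne by (intro cINF_greatest) auto
  then have "(INF z\<in>frontier S0. f z) = min D1 D2" using u1 u2 by linarith
  then show ?thesis unfolding f_def D1_def D2_def .
qed

lemma tanh_artanh_nonneg:
  fixes t :: real assumes "0 \<le> t" "t < 1" shows "tanh (artanh t) = t"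
proof -
  define A where "A = (1 + t) / (1 - t)"
  have A0: "A > 0" unfolding A_def using assms by auto
  have "artanh t = ln (sqrt A)" unfolding artanh_def A_def using A0 A_def by (simp add: ln_sqrt)
  then have "tanh (artanh t) = ((sqrt A)^2 - 1) / ((sqrt A)^2 + 1)"
    using tanh_ln_real[of "sqrt A"] A0 by simp
  also have "\<dots> = (A - 1) / (A + 1)" using A0 by simp
  also have "\<dots> = t" unfolding A_def using assms by (simp add: field_simps)
  finally show ?thesis .
qed

lemma sqrt4: "sqrt (4 * z) = 2 * sqrt (z::real)"
proof -
  have "sqrt (4 * z) = sqrt (2^2) * sqrt z" by (simp add: real_sqrt_mult)
  then show ?thesis by simp
qed

lemma formula:
  assumes x: "x \<in> S0" and y: "y \<in> S0"
  defines "u \<equiv> (Re x - Re y) / 2" and "al \<equiv> \<bar>Im x - Im y\<bar> / 2"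
    and "be \<equiv> min (Im x + Im y) (2 * pi - Im x - Im y) / 2"
  shows "0 \<le> al" "al < be" "be \<le> pi/2"
    "s_metric S0 x y = sqrt ((u^2 + al^2) / (u^2 + be^2))"
    "tanh (rho_S0 x y / 2) = sqrt ((sinh u ^ 2 + sin al ^ 2) / (sinh u ^ 2 + sin be ^ 2))"
proof -
  define a b p q where "a = Re x" "b = Re y" "p = Im x" "q = Im y"
  note abpq = a_b_p_q_def
  have px: "0 < p" "p < pi" and py: "0 < q" "q < pi" using x y unfolding S0_def abpq by auto
  show al0: "0 \<le> al" unfolding al_def by simp
  have "\<bar>p - q\<bar> < p + q" "\<bar>p - q\<bar> < 2 * pi - p - q" using px py by (auto simp: abs_if)
  then show alb: "al < be" unfolding al_def be_def abpq by (simp add: min_def)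
  show beb: "be \<le> pi/2" unfolding be_def by (simp add: min_def)
  have sbe: "sin be ^ 2 = sin ((p + q)/2) ^ 2"
  proof (cases "p + q \<le> 2 * pi - p - q")
    case True then show ?thesis unfolding be_def abpq by (simp add: min_def)
  next
    case False
    then have "be = pi - (p + q)/2" unfolding be_def abpq by (simp add: min_def field_simps)
    then show ?thesis by simp
  qed
  have sal: "sin al ^ 2 = sin ((p - q)/2) ^ 2"
  proof (cases "p \<le> q")
    case True
    then have "al = - ((p - q)/2)" unfolding al_def abpq by (auto simp: abs_if field_simps)
    then show ?thesis by (simp only: sin_minus power2_minus)
  next
    case False
    then have "al = (p - q)/2" unfolding al_def abpq by (auto simp: abs_if field_simps)
    then show ?thesis by (simp only:)
  qed
  have nxy: "cmod (x - y) = 2 * sqrt (u^2 + al^2)"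
  proof -
    have "cmod (x - y) = sqrt ((a - b)^2 + (p - q)^2)" unfolding cmod_def abpq by simp
    also have "(a - b)^2 + (p - q)^2 = 4 * (u^2 + al^2)" unfolding u_def al_def abpq
      by (simp add: power2_eq_square field_simps abs_mult_self_eq)
    finally show ?thesis by (simp only: sqrt4)
  qed
  have D1: "cmod (x - cnj y) = 2 * sqrt (u^2 + ((p + q)/2)^2)"
  proof -
    have "cmod (x - cnj y) = sqrt ((a - b)^2 + (p + q)^2)" unfolding cmod_def abpq by simp
    also have "(a - b)^2 + (p + q)^2 = 4 * (u^2 + ((p + q)/2)^2)" unfolding u_def abpq
      by (simp add: power2_eq_square field_simps)
    finally show ?thesis by (simp only: sqrt4)
  qed
  have D2: "cmod (x - (cnj y + 2 * pi * \<i>)) = 2 * sqrt (u^2 + ((2 * pi - p - q)/2)^2)"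
  proof -
    have "cmod (x - (cnj y + 2 * pi * \<i>)) = sqrt ((a - b)^2 + (p + q - 2 * pi)^2)" unfolding cmod_def abpq by (simp add: algebra_simps)
    also have "(a - b)^2 + (p + q - 2 * pi)^2 = 4 * (u^2 + ((2 * pi - p - q)/2)^2)" unfolding u_def abpq
      by (simp add: power2_eq_square field_simps)
    finally show ?thesis by (simp only: sqrt4)
  qed
  have mD: "min (cmod (x - cnj y)) (cmod (x - (cnj y + 2 * pi * \<i>))) = 2 * sqrt (u^2 + be^2)"
  proof (cases "p + q \<le> 2 * pi - p - q")
    case True
    then have bee: "(p + q)/2 = be" unfolding be_def abpq by (simp add: min_def)
    have "be^2 \<le> ((2 * pi - p - q)/2)^2" unfolding bee[symmetric] using True px py by (intro power_mono) auto
    then have "2 * sqrt (u^2 + be^2) \<le> 2 * sqrt (u^2 + ((2 * pi - p - q)/2)^2)" by simp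
    then show ?thesis unfolding D1 D2 bee by (rule min_absorb1)
  next
    case False
    then have bee: "(2 * pi - p - q)/2 = be" unfolding be_def abpq by (simp add: min_def)
    have "be^2 \<le> ((p + q)/2)^2" unfolding bee[symmetric] using False px py by (intro power_mono) auto
    then have "2 * sqrt (u^2 + be^2) \<le> 2 * sqrt (u^2 + ((p + q)/2)^2)" by simp
    then show ?thesis unfolding D1 D2 bee by (rule min_absorb2)
  qed
  show "s_metric S0 x y = sqrt ((u^2 + al^2) / (u^2 + be^2))"
    unfolding s_metric_def INF_S0[OF x y] mD nxy by (simp add: real_sqrt_divide)
  define E where "E = exp (a + b)"
  have E0: "E > 0" unfolding E_def by simp
  define X where "X = sinh u ^ 2 + sin al ^ 2"
  define Y where "Y = sinh u ^ 2 + sin be ^ 2"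
  have N2: "cmod (exp x - exp y) ^ 2 = 4 * E * X"
    unfolding cmod_exp_diff_sq X_def E_def sal u_def abpq ..
  have M2: "cmod (exp x - cnj (exp y)) ^ 2 = 4 * E * Y"
    unfolding exp_cnj cmod_exp_diff_sq Y_def E_def sbe u_def abpq by simp
  have "0 < be" using al0 alb by linarith
  moreover have "be < pi" using beb pi_gt_zero by linarith
  ultimately have "0 < sin be" by (rule sin_gt_zero)
  then have Y0: "0 < Y" unfolding Y_def by (simp add: add_nonneg_pos)
  have "sin al < sin be" using al0 alb beb by (subst sin_mono_less_eq) auto
  moreover have "0 \<le> sin al" using al0 alb beb by (intro sin_ge_zero) auto
  ultimately have "sin al ^ 2 < sin be ^ 2" by (intro power_strict_mono) auto
  then have XY: "X < Y" unfolding X_def Y_def by simp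
  have X0: "0 \<le> X" unfolding X_def by simp
  define T where "T = cmod (exp x - exp y) / cmod (exp x - cnj (exp y))"
  have T: "T = sqrt (X / Y)"
  proof -
    have "cmod (exp x - exp y) = sqrt (4 * E * X)" using N2 by (metis norm_ge_zero real_sqrt_abs abs_of_nonneg)
    moreover have "cmod (exp x - cnj (exp y)) = sqrt (4 * E * Y)" using M2 by (metis norm_ge_zero real_sqrt_abs abs_of_nonneg)
    ultimately have "T = sqrt (4 * E * X) / sqrt (4 * E * Y)" unfolding T_def by simp
    also have "\<dots> = sqrt (X / Y)" unfolding real_sqrt_divide[symmetric] using E0 by simp
    finally show ?thesis .
  qed
  have T01: "0 \<le> T" "T < 1" unfolding T using X0 XY Y0 by auto
  have "tanh (rho_S0 x y / 2) = tanh (artanh T)" unfolding rho_S0_def rho_H2_def T_def by simp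
  also have "\<dots> = T" using T01 by (rule tanh_artanh_nonneg)
  finally show "tanh (rho_S0 x y / 2) = sqrt ((sinh u ^ 2 + sin al ^ 2) / (sinh u ^ 2 + sin be ^ 2))"
    unfolding T X_def Y_def .
qed

lemma part1:
  assumes x: "x \<in> S0" and y: "y \<in> S0"
  shows "s_metric S0 x y \<le> tanh (rho_S0 x y / 2) \<and> tanh (rho_S0 x y / 2) \<le> (pi / 2) * s_metric S0 x y"
proof -
  define u al be where "u = (Re x - Re y) / 2" "al = \<bar>Im x - Im y\<bar> / 2"
    "be = min (Im x + Im y) (2 * pi - Im x - Im y) / 2"
  note f = formula[OF x y, folded u_al_be_def]
  have L: "(u^2 + al^2) / (u^2 + be^2) \<le> (sinh u ^ 2 + sin al ^ 2) / (sinh u ^ 2 + sin be ^ 2)"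
    using f(1-3) by (rule core_lower)
  have U: "(sinh u ^ 2 + sin al ^ 2) / (sinh u ^ 2 + sin be ^ 2) \<le> (pi^2/4) * ((u^2 + al^2) / (u^2 + be^2))"
    using f(1-3) by (rule core_upper)
  have "sqrt ((sinh u ^ 2 + sin al ^ 2) / (sinh u ^ 2 + sin be ^ 2)) \<le> sqrt ((pi^2/4) * ((u^2 + al^2) / (u^2 + be^2)))"
    using U by simp
  also have "\<dots> = (pi/2) * sqrt ((u^2 + al^2) / (u^2 + be^2))"
  proof -
    have h: "sqrt (pi^2/4) = pi/2" by (simp add: real_sqrt_divide)
    show ?thesis by (simp only: real_sqrt_mult h)
  qed
  finally show ?thesis unfolding f(4) f(5) using L by simp
qed

lemma part2:
  fixes c :: real assumes c: "c > 1"
  shows "\<exists>x\<in>S0. \<exists>y\<in>S0. x \<noteq> y \<and> tanh (rho_S0 x y / 2) < c * s_metric S0 x y"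
proof -
  define e where "e = arccos (1/c) / 2"
  have c0: "0 < 1/c" using c by simp
  have c1: "-1 < 1/c" "1/c < 1" "0 \<le> 1/c" using c c0 by (auto simp: field_simps)
  have ac: "0 < arccos (1/c)" "arccos (1/c) \<le> pi/2" using arccos_lt_bounded[OF c1(1,2)] arccos_le_pi2[of "1/c"] c1 by auto
  then have e0: "0 < e" "e \<le> pi/4" unfolding e_def by auto
  define x y where "x = Complex 0 (3 * e)" "y = Complex 0 e"
  have xS: "x \<in> S0" "y \<in> S0" unfolding x_y_def S0_def using e0 pi_gt_zero by auto
  have xy: "x \<noteq> y" unfolding x_y_def using e0 by simp
  have u: "(Re x - Re y) / 2 = 0" unfolding x_y_def by simp
  have al: "\<bar>Im x - Im y\<bar> / 2 = e" unfolding x_y_def using e0 by simp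
  have be: "min (Im x + Im y) (2 * pi - Im x - Im y) / 2 = 2 * e" unfolding x_y_def using e0 by (simp add: min_def)
  note f = formula[OF xS, unfolded u al be]
  have se: "0 < sin e" using e0 pi_gt_zero by (intro sin_gt_zero) auto
  have ce: "0 < cos e" using e0 by (intro cos_gt_zero) auto
  have S: "s_metric S0 x y = 1/2" unfolding f(4) using e0 by (simp add: power2_eq_square real_sqrt_divide)
  have T: "tanh (rho_S0 x y / 2) = 1 / (2 * cos e)"
  proof -
    have s2: "sin (2 * e) = 2 * sin e * cos e" by (rule sin_double)
    have s2p: "0 < sin (2 * e)" unfolding s2 using se ce by simp
    have "sqrt (sin e ^ 2 / sin (2 * e) ^ 2) = sin e / sin (2 * e)"
      using se s2p by (simp add: real_sqrt_divide)
    also have "\<dots> = 1 / (2 * cos e)" unfolding s2 using se ce by (simp add: field_simps)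
    finally show ?thesis unfolding f(5) by simp
  qed
  have "cos (arccos (1/c)) < cos e"
    using e0 ac by (intro cos_monotone_0_pi) (auto simp: e_def)
  then have "1/c < cos e" using c1 by simp
  then have "1 < c * cos e" using c by (simp add: field_simps)
  then have "1 / (2 * cos e) < c * (1/2)" using ce by (simp add: field_simps)
  then show ?thesis using xS xy S T by metis
qed

lemma part3:
  fixes c :: real assumes c: "c < pi / 2"
  shows "\<exists>x\<in>S0. \<exists>y\<in>S0. x \<noteq> y \<and> c * s_metric S0 x y < tanh (rho_S0 x y / 2)"
proof -
  define r where "r = 2 * c / pi"
  define v where "v = (if c \<le> 0 then 1 else ln (1 / r))"
  have r1: "r < 1" unfolding r_def using c pi_gt_zero by (simp add: field_simps)
  have v0: "0 < v" unfolding v_def r_def using r1 c pi_gt_zero by (auto simp: r_def field_simps)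
  define x y where "x = Complex v (pi/2)" "y = Complex (-v) (pi/2)"
  have xS: "x \<in> S0" "y \<in> S0" unfolding x_y_def S0_def using pi_gt_zero by auto
  have xy: "x \<noteq> y" unfolding x_y_def using v0 by simp
  have u: "(Re x - Re y) / 2 = v" unfolding x_y_def by simp
  have al: "\<bar>Im x - Im y\<bar> / 2 = 0" unfolding x_y_def by simp
  have be: "min (Im x + Im y) (2 * pi - Im x - Im y) / 2 = pi/2" unfolding x_y_def by (simp add: min_def)
  note f = formula[OF xS, unfolded u al be]
  have sh0: "0 < sinh v" using v0 by simp
  have T: "tanh (rho_S0 x y / 2) = sinh v / cosh v"
  proof -
    have "sinh v ^ 2 + 1 = cosh v ^ 2" by (simp add: cosh_square_eq)
    then have "sqrt (sinh v ^ 2 / (sinh v ^ 2 + 1)) = sinh v / cosh v"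
      using sh0 by (simp add: real_sqrt_divide)
    then show ?thesis unfolding f(5) by simp
  qed
  have Tpos: "0 < tanh (rho_S0 x y / 2)" unfolding T using sh0 by simp
  have S: "s_metric S0 x y = sqrt (v^2 / (v^2 + (pi/2)^2))" unfolding f(4) by simp
  show ?thesis
  proof (cases "c \<le> 0")
    case True
    have "c * s_metric S0 x y \<le> 0" using True by (simp add: S mult_nonpos_nonneg)
    then show ?thesis using Tpos xS xy by (metis order_le_less_trans)
  next
    case False
    then have r0: "0 < r" unfolding r_def using pi_gt_zero by simp
    have vv: "v = ln (1/r)" unfolding v_def using False by simp
    have S': "s_metric S0 x y = v / sqrt (v^2 + (pi/2)^2)" unfolding S using v0 by (simp add: real_sqrt_divide)
    have "pi/2 < sqrt (v^2 + (pi/2)^2)" using v0 by (intro real_less_rsqrt) simp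
    moreover have "0 < pi/2" using pi_gt_zero by simp
    ultimately have sq0: "0 < sqrt (v^2 + (pi/2)^2)" by linarith
    have "v / sqrt (v^2 + (pi/2)^2) < v / (pi/2)" using v0 \<open>0 < pi/2\<close> sq0 \<open>pi/2 < sqrt (v^2 + (pi/2)^2)\<close>
      by (intro divide_strict_left_mono) (auto simp: zero_less_mult_iff)
    then have "s_metric S0 x y < v / (pi/2)" unfolding S' .
    then have "c * s_metric S0 x y < c * (v / (pi/2))" using False by (intro mult_strict_left_mono) auto
    also have "\<dots> = r * v" unfolding r_def by simp
    also have "\<dots> \<le> sinh v / cosh v"
    proof -
      have ch: "0 < cosh v" by (simp add: cosh_real_pos)
      have "cosh v \<le> exp v" unfolding cosh_field_def using v0 by simp
      also have "\<dots> = 1 / r" unfolding vv using r0 by simp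
      finally have "r * cosh v \<le> 1" using r0 by (simp add: field_simps)
      then have "r * v * cosh v \<le> v" using v0 by (metis mult.commute mult.left_commute mult_left_mono mult_1_right less_imp_le)
      also have "v \<le> sinh v" using real_le_x_sinh[of v] v0 by (simp add: sinh_field_def exp_minus)
      finally show ?thesis using ch by (simp add: field_simps)
    qed
    finally show ?thesis using T xS xy by metis
  qed
qed

theorem theorem4p10:
  shows "(\<forall>x\<in>S0. \<forall>y\<in>S0.
            s_metric S0 x y \<le> tanh (rho_S0 x y / 2) \<and>
            tanh (rho_S0 x y / 2) \<le> (pi / 2) * s_metric S0 x y)
       \<and> (\<forall>c>1. \<exists>x\<in>S0. \<exists>y\<in>S0. x \<noteq> y \<and> tanh (rho_S0 x y / 2) < c * s_metric S0 x y)
       \<and> (\<forall>c<pi / 2. \<exists>x\<in>S0. \<exists>y\<in>S0. x \<noteq> y \<and> c * s_metric S0 x y < tanh (rho_S0 x y / 2))"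
  using part1 part2 part3 by blast

end
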